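(* For any integer $n \ge 2$, any integer $K \ge 1$, and any $L,\mu,\nu > 0$ with $\kappa := L/\mu \ge 4$, there exist a $4$-dimensional function $F \in \mathcal{F}(L,\mu,0,\nu)$ (with $n$ components) and an initialization point $\mathbf{x}_0$ such that for any permutation-based SGD (i.e. for any choice of permutations $\sigma_1,\dots,\sigma_K$) with any constant step size $\eta > 0$ started at $\mathbf{x}_0^1 = \mathbf{x}_0$, and any nonnegative weights $\alpha_1,\dots,\alpha_{K+1}$ (not all zero), the weighted average iterate $\hat{\mathbf{x}} = \frac{\sum_{k=1}^{K+1}\alpha_k\mathbf{x}_0^k}{\sum_{k=1}^{K+1}\alpha_k}$ satisfies $$F(\hat{\mathbf{x}}) - F^* = \Omega\left(\frac{L\nu^2}{\mu^2n^2K^2}\right).$$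
   Context: Finite-sum problem: $F(\mathbf{x}) = \frac1n\sum_{i=1}^n f_i(\mathbf{x})$ on $\mathbb{R}^d$, $F^* = \inf F$. $\mathcal{F}(L,\mu,\tau,\nu)$: all such $F$ with each $f_i$ $L$-smooth (i.e. $\|\nabla f_i(\mathbf{x})-\nabla f_i(\mathbf{y})\|\le L\|\mathbf{x}-\mathbf{y}\|$) and convex, $F$ $\mu$-strongly convex, and $\|\nabla f_i(\mathbf{x}) - \nabla F(\mathbf{x})\| \le \tau\|\nabla F(\mathbf{x})\| + \nu$ for all $i,\mathbf{x}$. Permutation-based SGD with constant step size $\eta$: at the start of each epoch $k = 1,\dots,K$ a permutation $\sigma_k$ of $[n]$ is chosen by an arbitrary rule (possibly depending on all past information), and $\mathbf{x}_i^k = \mathbf{x}_{i-1}^k - \eta\nabla f_{\sigma_k(i)}(\mathbf{x}_{i-1}^k)$ for $i = 1,\dots,n$, $\mathbf{x}_0^{k+1} = \mathbf{x}_n^k$. $\Omega(g)$ means at least a universal positive constant times $g$ (independent of $n,K,L,\mu,\nu,\eta$, the permutations and the weights). *)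

theory Defs
  imports "HOL-Analysis.Analysis" "HOL-Combinatorics.Permutations"
begin

text \<open>Components are indexed by 0..n-1; the component functions f i live on real^4 in the
  theorem, and g i is their gradient (tied to f i by has_derivative in the class predicate).\<close>

definition fs_obj :: "nat \<Rightarrow> (nat \<Rightarrow> 'a::real_normed_vector \<Rightarrow> real) \<Rightarrow> 'a \<Rightarrow> real" where
  "fs_obj n f x = (1 / real n) * (\<Sum>i<n. f i x)"

definition fs_grad :: "nat \<Rightarrow> (nat \<Rightarrow> 'a::real_normed_vector \<Rightarrow> 'a) \<Rightarrow> 'a \<Rightarrow> 'a" where
  "fs_grad n g x = (1 / real n) *\<^sub>R (\<Sum>i<n. g i x)"

definition strongly_convex :: "real \<Rightarrow> ('a::real_normed_vector \<Rightarrow> real) \<Rightarrow> bool" where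
  "strongly_convex \<mu> F \<longleftrightarrow>
     (\<forall>x y t. 0 \<le> t \<and> t \<le> 1 \<longrightarrow>
        F ((1 - t) *\<^sub>R x + t *\<^sub>R y) \<le> (1 - t) * F x + t * F y - \<mu> / 2 * t * (1 - t) * (norm (x - y))\<^sup>2)"

definition in_class ::
  "nat \<Rightarrow> real \<Rightarrow> real \<Rightarrow> real \<Rightarrow> real \<Rightarrow> (nat \<Rightarrow> 'a::real_inner \<Rightarrow> real) \<Rightarrow> (nat \<Rightarrow> 'a \<Rightarrow> 'a) \<Rightarrow> bool" where
  "in_class n L \<mu> \<tau> \<nu> f g \<longleftrightarrow>
     (\<forall>i<n. \<forall>x. (f i has_derivative (\<lambda>h. g i x \<bullet> h)) (at x)) \<and>
     (\<forall>i<n. \<forall>x y. norm (g i x - g i y) \<le> L * norm (x - y)) \<and>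
     (\<forall>i<n. convex_on UNIV (f i)) \<and>
     strongly_convex \<mu> (fs_obj n f) \<and>
     (\<forall>i<n. \<forall>x. norm (g i x - fs_grad n g x) \<le> \<tau> * norm (fs_grad n g x) + \<nu>)"

fun epoch_iter :: "(nat \<Rightarrow> 'a::real_normed_vector \<Rightarrow> 'a) \<Rightarrow> real \<Rightarrow> (nat \<Rightarrow> nat) \<Rightarrow> 'a \<Rightarrow> nat \<Rightarrow> 'a" where
  "epoch_iter g \<eta> s x 0 = x"
| "epoch_iter g \<eta> s x (Suc i) =
     epoch_iter g \<eta> s x i - \<eta> *\<^sub>R g (s i) (epoch_iter g \<eta> s x i)"

text \<open>Epoch start points: sgd_start ... 1 = x0, and the (k+1)-th start is the
  end of epoch k run with permutation sigma k.\<close>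
fun sgd_start :: "nat \<Rightarrow> (nat \<Rightarrow> 'a::real_normed_vector \<Rightarrow> 'a) \<Rightarrow> real \<Rightarrow> (nat \<Rightarrow> nat \<Rightarrow> nat) \<Rightarrow> 'a \<Rightarrow> nat \<Rightarrow> 'a" where
  "sgd_start n g \<eta> \<sigma> x0 0 = x0"
| "sgd_start n g \<eta> \<sigma> x0 (Suc k) =
     (if k = 0 then x0 else epoch_iter g \<eta> (\<sigma> k) (sgd_start n g \<eta> \<sigma> x0 k) n)"

end

theory Submission
  imports Defs
begin

definition Q :: "real \<Rightarrow> real" where "Q z = (max 0 z)^2"

lemma Q_deriv: "(Q has_real_derivative (2 * max 0 z)) (at z)"
proof (cases "z = 0")
  case True
  have "((\<lambda>h. (Q (0 + h) - Q 0) / h) \<longlongrightarrow> 0) (at 0)"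
  proof (rule tendsto_sandwich[where f="\<lambda>h. - \<bar>h\<bar>" and h="\<lambda>h. \<bar>h\<bar>"])
    show "\<forall>\<^sub>F h in at 0. - \<bar>h\<bar> \<le> (Q (0 + h) - Q 0) / h"
      by (auto simp: Q_def max_def power2_eq_square divide_simps intro!: always_eventually)
    show "\<forall>\<^sub>F h in at 0. (Q (0 + h) - Q 0) / h \<le> \<bar>h\<bar>"
      by (auto simp: Q_def max_def power2_eq_square divide_simps intro!: always_eventually)
    show "((\<lambda>h. - \<bar>h\<bar>) \<longlongrightarrow> 0) (at (0::real))"
      by (intro tendsto_eq_intros) auto
    show "((\<lambda>h. \<bar>h\<bar>) \<longlongrightarrow> 0) (at (0::real))"
      by (intro tendsto_eq_intros) auto
  qed
  then show ?thesis using True by (simp add: DERIV_def)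
next
  case False
  show ?thesis
  proof (cases "z > 0")
    case True
    have "((\<lambda>x. x^2) has_real_derivative (2 * max 0 z)) (at z)"
      using True by (auto intro!: derivative_eq_intros)
    then show ?thesis
    proof (rule has_field_derivative_transform_within_open[where S="{0<..}"])
      show "x^2 = Q x" if "x \<in> {0<..}" for x using that by (simp add: Q_def)
    qed (use True in auto)
  next
    case F2: False
    have "((\<lambda>x. 0) has_real_derivative (2 * max 0 z)) (at z)"
      using F2 False by (auto intro!: derivative_eq_intros)
    then show ?thesis
    proof (rule has_field_derivative_transform_within_open[where S="{..<0}"])
      show "0 = Q x" if "x \<in> {..<0}" for x using that by (simp add: Q_def)
    qed (use F2 False in auto)
  qed
qed

lemma Q_deriv_chain[derivative_intros]:
  "(f has_real_derivative f') (at x) \<Longrightarrow> ((\<lambda>x. Q (f x)) has_real_derivative (2 * max 0 (f x) * f')) (at x)"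
  using DERIV_chain2[OF Q_deriv] by blast

lemma deriv_lipschitz:
  fixes f :: "real \<Rightarrow> real"
  assumes "\<And>x. (f has_real_derivative f' x) (at x)" "\<And>x. \<bar>f' x\<bar> \<le> M"
  shows "\<bar>f a - f b\<bar> \<le> M * \<bar>a - b\<bar>"
proof -
  have *: "\<bar>f y - f x\<bar> \<le> M * (y - x)" if xy: "x < y" for x y
  proof -
    obtain z where "f y - f x = (y - x) * f' z"
      using MVT2[OF xy assms(1)] by blast
    then have "\<bar>f y - f x\<bar> = (y - x) * \<bar>f' z\<bar>" using xy by (simp add: abs_mult)
    also have "\<dots> \<le> (y - x) * M" using assms(2)[of z] xy by (intro mult_left_mono) auto
    finally show ?thesis by (simp add: mult.commute)
  qed
  show ?thesis
    using *[of a b] *[of b a] by (cases a b rule: linorder_cases) (auto simp: abs_minus_commute)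
qed

lemma deriv_mono:
  fixes f :: "real \<Rightarrow> real"
  assumes "\<And>x. (f has_real_derivative f' x) (at x)" "\<And>x. f' x \<ge> 0" "a \<le> b"
  shows "f a \<le> f b"
proof (cases "a < b")
  case True
  obtain z where "f b - f a = (b - a) * f' z"
    using MVT2[OF True assms(1)] by blast
  moreover have "(b - a) * f' z \<ge> 0" using True assms(2)[of z] by simp
  ultimately show ?thesis by simp
qed (use assms in auto)

definition gfun :: "real \<Rightarrow> real \<Rightarrow> real \<Rightarrow> real" where
  "gfun \<gamma> z1 z = \<gamma> / 2 * (Q z - Q (z - z1))"
definition gd :: "real \<Rightarrow> real \<Rightarrow> real \<Rightarrow> real" where
  "gd \<gamma> z1 z = \<gamma> * (max 0 z - max 0 (z - z1))"
definition hfun :: "real \<Rightarrow> real \<Rightarrow> real" where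
  "hfun w u = (u^2 - Q (u - w) - Q (- u - w)) / (2 * w)"
definition hdr :: "real \<Rightarrow> real \<Rightarrow> real" where
  "hdr w u = (u - max 0 (u - w) + max 0 (- u - w)) / w"

lemma gfun_deriv: "(gfun \<gamma> z1 has_real_derivative gd \<gamma> z1 z) (at z)"
  unfolding gfun_def gd_def
  by (auto intro!: derivative_eq_intros simp: algebra_simps)

lemma hfun_deriv: "w > 0 \<Longrightarrow> (hfun w has_real_derivative hdr w u) (at u)"
  unfolding hfun_def hdr_def
  by (auto intro!: derivative_eq_intros simp: field_simps)

lemma gd_nonneg: "z1 \<ge> 0 \<Longrightarrow> \<gamma> \<ge> 0 \<Longrightarrow> gd \<gamma> z1 z \<ge> 0"
  unfolding gd_def by (auto simp: max_def)
lemma gd_le: "z1 \<ge> 0 \<Longrightarrow> \<gamma> \<ge> 0 \<Longrightarrow> gd \<gamma> z1 z \<le> \<gamma> * z1"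
  unfolding gd_def by (intro mult_left_mono) (auto simp: max_def)
lemma gd_sat: "z \<ge> z1 \<Longrightarrow> z1 \<ge> 0 \<Longrightarrow> gd \<gamma> z1 z = \<gamma> * z1"
  unfolding gd_def by (auto simp: max_def)
lemma max_clamp_lip: "(z1::real) \<ge> 0 \<Longrightarrow> \<bar>max 0 a - max 0 (a - z1) - (max 0 b - max 0 (b - z1))\<bar> \<le> \<bar>a - b\<bar>"
  by (simp add: max_def abs_if)
lemma gd_lip: "z1 \<ge> 0 \<Longrightarrow> \<gamma> \<ge> 0 \<Longrightarrow> \<bar>gd \<gamma> z1 a - gd \<gamma> z1 b\<bar> \<le> \<gamma> * \<bar>a - b\<bar>"
  unfolding gd_def right_diff_distrib[symmetric] abs_mult
  using max_clamp_lip[of z1 a b] by (intro mult_mono) auto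
lemma gd_mono: "z1 \<ge> 0 \<Longrightarrow> \<gamma> \<ge> 0 \<Longrightarrow> a \<le> b \<Longrightarrow> gd \<gamma> z1 a \<le> gd \<gamma> z1 b"
  unfolding gd_def by (intro mult_left_mono) (auto simp: max_def)

lemma hdr_abs: "w > 0 \<Longrightarrow> \<bar>hdr w u\<bar> \<le> 1"
  unfolding hdr_def by (auto simp: max_def divide_simps)
lemma hdr_lip0: "(w::real) > 0 \<Longrightarrow> \<bar>a - max 0 (a - w) + max 0 (- a - w) - (b - max 0 (b - w) + max 0 (- b - w))\<bar> \<le> \<bar>a - b\<bar>"
  by (simp add: max_def abs_if)
lemma hdr_lip: assumes "w > 0" shows "\<bar>hdr w a - hdr w b\<bar> \<le> \<bar>a - b\<bar> / w"
  unfolding hdr_def diff_divide_distrib[symmetric] abs_divide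
  using hdr_lip0[of w a b] assms by (simp add: divide_right_mono)
lemma hdr_mono: "w > 0 \<Longrightarrow> a \<le> b \<Longrightarrow> hdr w a \<le> hdr w b"
  unfolding hdr_def by (intro divide_right_mono) (auto simp: max_def)

lemma hfun_big: "w > 0 \<Longrightarrow> \<bar>u\<bar> \<ge> w \<Longrightarrow> hfun w u = \<bar>u\<bar> - w / 2"
  unfolding hfun_def Q_def by (auto simp: max_def field_simps power2_eq_square)

lemma hfun_lip: "w > 0 \<Longrightarrow> \<bar>hfun w a - hfun w b\<bar> \<le> \<bar>a - b\<bar>"
  using deriv_lipschitz[of "hfun w" "hdr w" 1 a b] hfun_deriv hdr_abs by auto

lemma gfun_nonneg: "z1 \<ge> 0 \<Longrightarrow> \<gamma> \<ge> 0 \<Longrightarrow> gfun \<gamma> z1 z \<ge> 0"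
  using deriv_mono[of "gfun \<gamma> z1" "gd \<gamma> z1" "min z 0" z] gfun_deriv gd_nonneg
  by (fastforce simp: gfun_def Q_def max_def)

lemma gfun_0: "z1 \<ge> 0 \<Longrightarrow> gfun \<gamma> z1 0 = 0"
  by (simp add: gfun_def Q_def)

lemma gfun_mono: "z1 \<ge> 0 \<Longrightarrow> \<gamma> \<ge> 0 \<Longrightarrow> a \<le> b \<Longrightarrow> gfun \<gamma> z1 a \<le> gfun \<gamma> z1 b"
  using deriv_mono[of "gfun \<gamma> z1" "gd \<gamma> z1" a b] gfun_deriv gd_nonneg by blast

lemma gfun_convex: "z1 \<ge> 0 \<Longrightarrow> \<gamma> \<ge> 0 \<Longrightarrow> convex_on UNIV (gfun \<gamma> z1)"
  by (rule convex_on_realI[where f'="gd \<gamma> z1"]) (auto intro: gfun_deriv gd_mono)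

lemma hfun_convex: "w > 0 \<Longrightarrow> convex_on UNIV (hfun w)"
  by (rule convex_on_realI[where f'="hdr w"]) (auto intro: hfun_deriv hdr_mono)


lemma gfun_chain[derivative_intros]:
  "(f has_derivative f') (at x within s) \<Longrightarrow>
   ((\<lambda>x. gfun \<gamma> z1 (f x)) has_derivative (\<lambda>h. f' h * gd \<gamma> z1 (f x))) (at x within s)"
  by (rule DERIV_compose_FDERIV[OF gfun_deriv])

lemma hfun_chain[derivative_intros]:
  "w > 0 \<Longrightarrow> (f has_derivative f') (at x within s) \<Longrightarrow>
   ((\<lambda>x. hfun w (f x)) has_derivative (\<lambda>h. f' h * hdr w (f x))) (at x within s)"
  by (rule DERIV_compose_FDERIV[OF hfun_deriv])

lemma vec_nth_has_derivative[derivative_intros]: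
  "((\<lambda>x::real^'n. x $ i) has_derivative (\<lambda>h. h $ i)) F"
  by (rule bounded_linear_imp_has_derivative) (rule bounded_linear_vec_nth)

lemma sq_ident:
  fixes x y :: "'a::real_inner"
  shows "((1-t) *\<^sub>R x + t *\<^sub>R y) \<bullet> ((1-t) *\<^sub>R x + t *\<^sub>R y)
     = (1-t) * (x \<bullet> x) + t * (y \<bullet> y) - t * (1-t) * ((x - y) \<bullet> (x - y))"
  by (simp add: inner_add_left inner_add_right inner_diff_left inner_diff_right inner_commute algebra_simps)

lemma alt_sum: "(\<Sum>j<n. (-1::real)^j) = (if even n then 0 else 1)"
  by (induction n) auto

lemma epoch_inv:
  assumes "\<And>i x. i < N \<Longrightarrow> Pr x \<Longrightarrow> Pr (x - eta *\<^sub>R g i x)" "\<forall>j<m. s j < N" "Pr x"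
  shows "Pr (epoch_iter g eta s x m)"
  using assms(2,3) by (induction m) (auto intro: assms(1))

lemma sgd_inv:
  assumes "\<And>i x. i < N \<Longrightarrow> Pr x \<Longrightarrow> Pr (x - eta *\<^sub>R g i x)"
    "\<forall>k\<in>{1..KK}. sig k permutes {..<N}" "Pr x0" "k \<le> KK + 1"
  shows "Pr (sgd_start N g eta sig x0 k)"
  using assms(4)
proof (induction k)
  case 0 then show ?case using assms(3) by simp
next
  case (Suc k)
  show ?case
  proof (cases "k = 0")
    case True then show ?thesis using assms(3) by simp
  next
    case False
    have "sig k permutes {..<N}" using assms(2) Suc.prems False by auto
    then have "\<forall>j<N. sig k j < N" by (metis lessThan_iff permutes_in_image)
    then show ?thesis using False Suc by (auto intro: epoch_inv[where Pr=Pr and N=N and g=g and eta=eta, OF assms(1)])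
  qed
qed

lemma epoch_decay:
  fixes V :: "'a::real_normed_vector \<Rightarrow> real" and rho c :: real
  assumes "\<And>i x c. i < N \<Longrightarrow> c \<ge> 0 \<Longrightarrow> V x \<ge> c \<Longrightarrow> V (x - eta *\<^sub>R g i x) \<ge> rho * c"
    "rho \<ge> 0" "\<forall>j<m. s j < N" "c \<ge> 0" "V x \<ge> c"
  shows "V (epoch_iter g eta s x m) \<ge> rho ^ m * c"
  using assms(3)
proof (induction m)
  case 0 then show ?case using assms(5) by simp
next
  case (Suc m)
  have "V (epoch_iter g eta s x m) \<ge> rho ^ m * c" using Suc by auto
  moreover have "rho ^ m * c \<ge> 0" using assms(2,4) by simp
  ultimately have "V (epoch_iter g eta s x (Suc m)) \<ge> rho * (rho ^ m * c)"
    using assms(1)[of "s m" "rho ^ m * c" "epoch_iter g eta s x m"] Suc.prems by simp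
  then show ?case by (simp add: mult.assoc)
qed

lemma sgd_decay:
  fixes V :: "'a::real_normed_vector \<Rightarrow> real" and rho c :: real
  assumes "\<And>i x c. i < N \<Longrightarrow> c \<ge> 0 \<Longrightarrow> V x \<ge> c \<Longrightarrow> V (x - eta *\<^sub>R g i x) \<ge> rho * c"
    "rho \<ge> 0" "\<forall>k\<in>{1..KK}. sig k permutes {..<N}" "c \<ge> 0" "V x0 \<ge> c" "1 \<le> k" "k \<le> KK + 1"
  shows "V (sgd_start N g eta sig x0 k) \<ge> rho ^ (N * (k - 1)) * c"
  using assms(6,7)
proof (induction k)
  case 0 then show ?case by simp
next
  case (Suc k)
  show ?case
  proof (cases "k = 0")
    case True then show ?thesis using assms(5) by simp
  next
    case False
    have "sig k permutes {..<N}" using assms(3) Suc.prems False by auto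
    then have "\<forall>j<N. sig k j < N" by (metis lessThan_iff permutes_in_image)
    moreover have ih: "V (sgd_start N g eta sig x0 k) \<ge> rho ^ (N * (k - 1)) * c" using Suc False by auto
    moreover have "rho ^ (N * (k - 1)) * c \<ge> 0" using assms(2,4) by simp
    ultimately have f1: "V (epoch_iter g eta (sig k) (sgd_start N g eta sig x0 k) N) \<ge> rho ^ N * (rho ^ (N * (k - 1)) * c)"
      by (intro epoch_decay[where V=V and rho=rho and N=N and g=g and eta=eta, OF assms(1) assms(2)]) auto
    have f2: "rho ^ N * (rho ^ (N * (k - 1)) * c) = rho ^ (N * (Suc k - 1)) * c"
    proof -
      have "N + N * (k - 1) = N * (Suc k - 1)" using False by (cases k) auto
      then have "rho ^ N * rho ^ (N * (k - 1)) = rho ^ (N * (Suc k - 1))" by (metis power_add)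
      then show ?thesis by (simp add: mult.assoc[symmetric])
    qed
    have eqs: "sgd_start N g eta sig x0 (Suc k) = epoch_iter g eta (sig k) (sgd_start N g eta sig x0 k) N"
      using False by simp
    show ?thesis using f1 unfolding f2 eqs .
  qed
qed

locale cons =
  fixes n K :: nat and L \<mu> \<nu> :: real
  assumes n2: "n \<ge> 2" and K1: "K \<ge> 1" and Lpos: "L > 0" and mupos: "\<mu> > 0" and nupos: "\<nu> > 0"
    and kap: "L / \<mu> \<ge> 4"
begin

definition "th = sqrt (L / \<mu>)"
definition "lam = 3 * L / 4"
definition "gam = \<mu> / 20"
definition "P = th * \<nu> / (1000 * n * K)"
definition "z1 = P / gam"
definition "vb = P / \<mu>"
definition "Ub = \<nu> / (20 * \<mu> * n * K)"
definition "U = 5 * (\<nu> + P * th) / lam + Ub"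
definition "an = (\<Sum>j<n. (-1::real)^j) / n"
definition "cc i = 2 * \<nu> / 3 * ((-1)^i - an)"
definition zz :: "real^4 \<Rightarrow> real" where "zz x = th * hfun Ub (x$1) - x$2"
definition ff :: "nat \<Rightarrow> real^4 \<Rightarrow> real" where
  "ff i x = \<mu> / 2 * (x \<bullet> x) + (lam - \<mu>) / 2 * (x$1)^2 + cc i * x$1 + gfun gam z1 (zz x)"
definition CC :: "real^4 \<Rightarrow> real^4" where
  "CC x = \<mu> *\<^sub>R x + ((lam - \<mu>) * x$1 + th * gd gam z1 (zz x) * hdr Ub (x$1)) *\<^sub>R axis 1 1
      - gd gam z1 (zz x) *\<^sub>R axis 2 1"
definition gg :: "nat \<Rightarrow> real^4 \<Rightarrow> real^4" where
  "gg i x = CC x + cc i *\<^sub>R axis 1 1"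
definition x0 :: "real^4" where "x0 = U *\<^sub>R axis 1 1 + vb *\<^sub>R axis 2 1"

lemma kap_pos: "L / \<mu> > 0" using kap by simp
lemma th_pos: "th > 0" unfolding th_def using kap by simp
lemma th_sq: "th^2 = L / \<mu>" unfolding th_def using kap by simp
lemma n_pos: "real n > 0" using n2 by simp
lemma K_pos: "real K > 0" using K1 by simp
lemma nK_pos: "real n * real K > 0" using n2 K1 by simp
lemma P_pos: "P > 0" unfolding P_def using th_pos nupos n_pos K_pos by (auto intro!: divide_pos_pos mult_pos_pos)
lemma gam_pos: "gam > 0" unfolding gam_def using mupos by simp
lemma z1_pos: "z1 > 0" unfolding z1_def using P_pos gam_pos by simp
lemma vb_pos: "vb > 0" unfolding vb_def using P_pos mupos by simp
lemma Ub_pos: "Ub > 0" unfolding Ub_def using nupos mupos n_pos K_pos by (auto intro!: divide_pos_pos mult_pos_pos)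
lemma lam_pos: "lam > 0" unfolding lam_def using Lpos by simp
lemma lam_mu: "lam - \<mu> \<ge> 0" unfolding lam_def using kap mupos by (simp add: field_simps)
lemma U_ge: "U \<ge> Ub" unfolding U_def using nupos P_pos th_pos lam_pos by simp
lemma P_eq: "P = \<mu> * vb" unfolding vb_def using mupos by simp
lemma gamz1: "gam * z1 = P" unfolding z1_def using gam_pos by simp

lemma an_bound: "\<bar>an\<bar> \<le> 1/2"
  unfolding an_def alt_sum using n2 by (auto simp: divide_simps)
lemma cc_le: "\<bar>cc i\<bar> \<le> \<nu>"
proof -
  have "\<bar>(-1::real)^i - an\<bar> \<le> 3/2" using an_bound by (cases "even i") auto
  then show ?thesis unfolding cc_def using nupos by (simp add: abs_mult)
qed
lemma cc_ge: "\<bar>cc i\<bar> \<ge> \<nu> / 3"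
proof -
  have "\<bar>(-1::real)^i - an\<bar> \<ge> 1/2" using an_bound by (cases "even i") auto
  then show ?thesis unfolding cc_def using nupos by (simp add: abs_mult)
qed
lemma cc_sum: "(\<Sum>i<n. cc i) = 0"
proof -
  have "(\<Sum>i<n. ((-1::real)^i - an)) = 0" using n2 by (simp add: sum_subtractf an_def)
  then show ?thesis unfolding cc_def sum_distrib_left[symmetric] by simp
qed

lemma ff_deriv: "(ff i has_derivative (\<lambda>h. gg i x \<bullet> h)) (at x)"
proof -
  have "(ff i has_derivative (\<lambda>h. \<mu> / 2 * (h \<bullet> x + x \<bullet> h) + (lam - \<mu>) / 2 * (2 * x$1 * h$1)
     + cc i * h$1 + (th * (h$1 * hdr Ub (x$1)) - h$2) * gd gam z1 (zz x))) (at x)"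
    unfolding ff_def[abs_def] zz_def using Ub_pos
    by (auto intro!: derivative_eq_intros simp: power2_eq_square)
  moreover have "(\<lambda>h. \<mu> / 2 * (h \<bullet> x + x \<bullet> h) + (lam - \<mu>) / 2 * (2 * x$1 * h$1)
     + cc i * h$1 + (th * (h$1 * hdr Ub (x$1)) - h$2) * gd gam z1 (zz x)) = (\<lambda>h. gg i x \<bullet> h)"
    by (rule ext) (simp add: gg_def CC_def inner_add_left inner_diff_left inner_axis inner_axis' inner_commute algebra_simps; simp add: field_simps)
  ultimately show ?thesis by simp
qed


lemma th_sq2: "th * th = L / \<mu>" using th_sq by (simp add: power2_eq_square)
lemma mu_le: "\<mu> \<le> L / 4" using kap mupos by (simp add: field_simps)

lemma thP_Ub: "th * P / Ub = L / 50"
proof -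
  have "th * P / Ub = (th * th) * \<mu> / 50"
    unfolding P_def Ub_def using nupos mupos n_pos K_pos by (simp add: field_simps)
  also have "\<dots> = L / 50" using th_sq2 mupos by simp
  finally show ?thesis .
qed

lemma smooth_num: "lam + gam * (th + 1)^2 + th * P / Ub \<le> L"
proof -
  have e: "(th + 1)^2 = 2 * (th * th) + 2 - (th - 1)^2" by (simp add: power2_eq_square algebra_simps)
  have "(th - 1)^2 \<ge> 0" by simp
  then have "(th + 1)^2 \<le> 2 * (th * th) + 2" using e by linarith
  then have "gam * (th + 1)^2 \<le> gam * (2 * (th * th) + 2)" using gam_pos by (intro mult_left_mono) auto
  also have "\<dots> = (L + \<mu>) / 10" unfolding gam_def th_sq2 using mupos by (simp add: field_simps)
  finally have "gam * (th + 1)^2 \<le> (L + \<mu>) / 10" .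
  moreover have "(L + \<mu>) / 10 \<le> L / 8" using mu_le by simp
  ultimately show ?thesis using thP_Ub Lpos unfolding lam_def by linarith
qed

lemma gg_lip: "norm (gg i a - gg i b) \<le> L * norm (a - b)"
proof -
  define ga where "ga = gd gam z1 (zz a)"
  define gb where "gb = gd gam z1 (zz b)"
  define ha where "ha = hdr Ub (a$1)"
  define hb where "hb = hdr Ub (b$1)"
  define N where "N = norm (a - b)"
  have d1: "\<bar>a$1 - b$1\<bar> \<le> N" unfolding N_def using component_le_norm_cart[of "a - b" 1] by simp
  have d2: "\<bar>a$2 - b$2\<bar> \<le> N" unfolding N_def using component_le_norm_cart[of "a - b" 2] by simp
  have dh: "\<bar>hfun Ub (a$1) - hfun Ub (b$1)\<bar> \<le> N" using hfun_lip[OF Ub_pos] d1 by (rule order_trans)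
  have dz: "\<bar>zz a - zz b\<bar> \<le> (th + 1) * N"
  proof -
    have "zz a - zz b = th * (hfun Ub (a$1) - hfun Ub (b$1)) - (a$2 - b$2)"
      unfolding zz_def by (simp add: algebra_simps)
    then have "\<bar>zz a - zz b\<bar> \<le> th * \<bar>hfun Ub (a$1) - hfun Ub (b$1)\<bar> + \<bar>a$2 - b$2\<bar>"
      using th_pos abs_triangle_ineq4[of "th * (hfun Ub (a$1) - hfun Ub (b$1))" "a$2 - b$2"]
      by (simp add: abs_mult)
    also have "\<dots> \<le> th * N + N" using dh d2 th_pos by (intro add_mono mult_left_mono) auto
    finally show ?thesis by (simp add: algebra_simps)
  qed
  have dg: "\<bar>ga - gb\<bar> \<le> gam * ((th + 1) * N)"
    unfolding ga_def gb_def using gd_lip[of z1 gam "zz a" "zz b"] z1_pos gam_pos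
      mult_left_mono[OF dz, of gam] by linarith
  have gb_b: "\<bar>gb\<bar> \<le> P" unfolding gb_def using gd_nonneg[of z1 gam "zz b"] gd_le[of z1 gam "zz b"] z1_pos gam_pos gamz1
    by simp
  have ha_b: "\<bar>ha\<bar> \<le> 1" unfolding ha_def using hdr_abs[OF Ub_pos] .
  have dhd: "\<bar>ha - hb\<bar> \<le> N / Ub" unfolding ha_def hb_def
    using hdr_lip[OF Ub_pos, of "a$1" "b$1"] divide_right_mono[OF d1, of Ub] Ub_pos by linarith
  have prod: "\<bar>ga * ha - gb * hb\<bar> \<le> gam * ((th + 1) * N) + P * (N / Ub)"
  proof -
    have "ga * ha - gb * hb = (ga - gb) * ha + gb * (ha - hb)" by (simp add: algebra_simps)
    then have "\<bar>ga * ha - gb * hb\<bar> \<le> \<bar>ga - gb\<bar> * \<bar>ha\<bar> + \<bar>gb\<bar> * \<bar>ha - hb\<bar>"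
      by (simp add: abs_mult[symmetric] abs_triangle_ineq)
    also have "\<dots> \<le> gam * ((th + 1) * N) * 1 + P * (N / Ub)"
      using dg ha_b gb_b dhd by (intro add_mono mult_mono) auto
    finally show ?thesis by simp
  qed
  have eq: "gg i a - gg i b = \<mu> *\<^sub>R (a - b)
      + ((lam - \<mu>) * (a$1 - b$1) + th * (ga * ha - gb * hb)) *\<^sub>R axis 1 1 - (ga - gb) *\<^sub>R axis 2 1"
    unfolding gg_def CC_def ga_def gb_def ha_def hb_def by (simp add: algebra_simps)
  have "norm (gg i a - gg i b) \<le> \<mu> * N + \<bar>(lam - \<mu>) * (a$1 - b$1) + th * (ga * ha - gb * hb)\<bar> + \<bar>ga - gb\<bar>"
  proof -
    let ?A = "\<mu> *\<^sub>R (a - b)"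
    let ?B = "((lam - \<mu>) * (a$1 - b$1) + th * (ga * ha - gb * hb)) *\<^sub>R axis 1 (1::real) :: real^4"
    let ?C = "(ga - gb) *\<^sub>R axis 2 (1::real) :: real^4"
    have "norm (?A + ?B - ?C) \<le> norm (?A + ?B) + norm ?C" by (rule norm_triangle_ineq4)
    also have "\<dots> \<le> norm ?A + norm ?B + norm ?C" using norm_triangle_ineq[of ?A ?B] by linarith
    finally show ?thesis unfolding eq N_def using mupos by simp
  qed
  also have "\<dots> \<le> \<mu> * N + ((lam - \<mu>) * N + th * (gam * ((th + 1) * N) + P * (N / Ub))) + gam * ((th + 1) * N)"
  proof -
    have "\<bar>(lam - \<mu>) * (a$1 - b$1) + th * (ga * ha - gb * hb)\<bar> \<le> (lam - \<mu>) * \<bar>a$1 - b$1\<bar> + th * \<bar>ga * ha - gb * hb\<bar>"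
      using lam_mu th_pos abs_triangle_ineq[of "(lam - \<mu>) * (a$1 - b$1)" "th * (ga * ha - gb * hb)"]
      by (simp add: abs_mult)
    also have "\<dots> \<le> (lam - \<mu>) * N + th * (gam * ((th + 1) * N) + P * (N / Ub))"
      using d1 prod lam_mu th_pos by (intro add_mono mult_left_mono) auto
    finally show ?thesis using dg by linarith
  qed
  also have "\<dots> = (lam + gam * (th + 1)^2 + th * P / Ub) * N"
    by (simp add: power2_eq_square algebra_simps)
  also have "\<dots> \<le> L * N" using smooth_num N_def by (intro mult_right_mono) auto
  finally show ?thesis unfolding N_def .
qed


lemma cvx_inner: "convex_on UNIV (\<lambda>x::real^4. x \<bullet> x)"
proof (rule convex_onI)
  fix t :: real and x y :: "real^4" assume t: "0 < t" "t < 1"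
  have "(x - y) \<bullet> (x - y) \<ge> 0" by simp
  then show "((1 - t) *\<^sub>R x + t *\<^sub>R y) \<bullet> ((1 - t) *\<^sub>R x + t *\<^sub>R y) \<le> (1 - t) * (x \<bullet> x) + t * (y \<bullet> y)"
    unfolding sq_ident using t by (simp add: mult_nonneg_nonneg)
qed auto

lemma cvx_sq1: "convex_on UNIV (\<lambda>x::real^4. (x$1)^2)"
proof (rule convex_onI)
  fix t :: real and x y :: "real^4" assume t: "0 < t" "t < 1"
  have e: "(1 - t) * (x$1)^2 + t * (y$1)^2 - ((1 - t) * x$1 + t * y$1)^2 = t * (1 - t) * (x$1 - y$1)^2"
    by (simp add: power2_eq_square algebra_simps)
  have "t * (1 - t) * (x$1 - y$1)^2 \<ge> 0" using t by simp
  then show "(((1 - t) *\<^sub>R x + t *\<^sub>R y)$1)^2 \<le> (1 - t) * (x$1)^2 + t * (y$1)^2"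
    using e by simp
qed auto

lemma cvx_lin1: "convex_on UNIV (\<lambda>x::real^4. c * x$1)"
  by (rule convex_onI) (auto simp: algebra_simps)

lemma zz_cvx: "t \<ge> 0 \<Longrightarrow> t \<le> 1 \<Longrightarrow> zz ((1 - t) *\<^sub>R x + t *\<^sub>R y) \<le> (1 - t) * zz x + t * zz y"
proof -
  assume t: "t \<ge> 0" "t \<le> 1"
  have "hfun Ub ((1 - t) *\<^sub>R x$1 + t *\<^sub>R y$1) \<le> (1 - t) * hfun Ub (x$1) + t * hfun Ub (y$1)"
    using convex_onD[OF hfun_convex[OF Ub_pos], of t "x$1" "y$1"] t by simp
  then have "th * hfun Ub ((1 - t) * x$1 + t * y$1) \<le> th * ((1 - t) * hfun Ub (x$1) + t * hfun Ub (y$1))"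
    using th_pos by (intro mult_left_mono) auto
  then show ?thesis unfolding zz_def by (simp add: algebra_simps)
qed

lemma cvx_gz: "convex_on UNIV (\<lambda>x. gfun gam z1 (zz x))"
proof (rule convex_onI)
  fix t :: real and x y :: "real^4" assume t: "0 < t" "t < 1"
  have "gfun gam z1 (zz ((1 - t) *\<^sub>R x + t *\<^sub>R y)) \<le> gfun gam z1 ((1 - t) * zz x + t * zz y)"
    using zz_cvx[of t x y] t gfun_mono z1_pos gam_pos by auto
  also have "\<dots> \<le> (1 - t) * gfun gam z1 (zz x) + t * gfun gam z1 (zz y)"
    using convex_onD[OF gfun_convex, of z1 gam t "zz x" "zz y"] z1_pos gam_pos t by simp
  finally show "gfun gam z1 (zz ((1 - t) *\<^sub>R x + t *\<^sub>R y)) \<le> (1 - t) * gfun gam z1 (zz x) + t * gfun gam z1 (zz y)" .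
qed auto

definition RR :: "real^4 \<Rightarrow> real" where "RR x = (lam - \<mu>) / 2 * (x$1)^2 + gfun gam z1 (zz x)"

lemma cvx_RR: "convex_on UNIV RR"
  unfolding RR_def[abs_def] using lam_mu
  by (intro convex_on_add convex_on_cmul cvx_sq1 cvx_gz) auto

lemma cvx_ff: "convex_on UNIV (ff i)"
  unfolding ff_def[abs_def] using lam_mu mupos
  by (intro convex_on_add convex_on_cmul cvx_sq1 cvx_gz cvx_inner cvx_lin1) auto

lemma fs_obj_eq: "fs_obj n ff x = \<mu> / 2 * (x \<bullet> x) + RR x"
proof -
  have "(\<Sum>i<n. ff i x) = (\<Sum>i<n. \<mu> / 2 * (x \<bullet> x) + RR x + cc i * x$1)"
    unfolding ff_def RR_def by (simp add: algebra_simps)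
  also have "\<dots> = real n * (\<mu> / 2 * (x \<bullet> x) + RR x) + (\<Sum>i<n. cc i) * x$1"
    by (simp add: sum.distrib sum_distrib_right)
  finally show ?thesis unfolding fs_obj_def cc_sum using n_pos by simp
qed

lemma sc_aux: "(a::real) \<le> (1 - t) * b + t * c \<Longrightarrow> e = (1 - t) * X + t * Y - Kc \<Longrightarrow> e + a \<le> (1 - t) * (X + b) + t * (Y + c) - Kc"
  by (simp add: algebra_simps)

lemma sc: "strongly_convex \<mu> (fs_obj n ff)"
  unfolding strongly_convex_def fs_obj_eq
proof (intro allI impI)
  fix x y :: "real^4" and t :: real assume t: "0 \<le> t \<and> t \<le> 1"
  have r: "RR ((1 - t) *\<^sub>R x + t *\<^sub>R y) \<le> (1 - t) * RR x + t * RR y"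
    using convex_onD[OF cvx_RR, of t x y] t by simp
  have n2': "(norm (x - y))^2 = (x - y) \<bullet> (x - y)" by (rule power2_norm_eq_inner)
  have e: "\<mu> / 2 * (((1 - t) *\<^sub>R x + t *\<^sub>R y) \<bullet> ((1 - t) *\<^sub>R x + t *\<^sub>R y)) =
      (1 - t) * (\<mu> / 2 * (x \<bullet> x)) + t * (\<mu> / 2 * (y \<bullet> y)) - \<mu> / 2 * t * (1 - t) * (norm (x - y))\<^sup>2"
  proof -
    have gen: "\<And>A B D::real. \<mu> / 2 * ((1 - t) * A + t * B - t * (1 - t) * D) = (1 - t) * (\<mu> / 2 * A) + t * (\<mu> / 2 * B) - \<mu> / 2 * t * (1 - t) * D"
      by (simp add: field_simps)
    show ?thesis unfolding sq_ident n2' by (rule gen)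
  qed
  show "\<mu> / 2 * (((1 - t) *\<^sub>R x + t *\<^sub>R y) \<bullet> ((1 - t) *\<^sub>R x + t *\<^sub>R y)) + RR ((1 - t) *\<^sub>R x + t *\<^sub>R y)
    \<le> (1 - t) * (\<mu> / 2 * (x \<bullet> x) + RR x) + t * (\<mu> / 2 * (y \<bullet> y) + RR y) - \<mu> / 2 * t * (1 - t) * (norm (x - y))\<^sup>2"
    using sc_aux[OF r e] .
qed

lemma fs_grad_eq: "fs_grad n gg x = CC x"
proof -
  have "(\<Sum>i<n. gg i x) = real n *\<^sub>R CC x + (\<Sum>i<n. cc i) *\<^sub>R axis 1 1"
    unfolding gg_def by (simp add: sum.distrib scaleR_sum_left sum_constant_scaleR del: sum_constant)
  then show ?thesis unfolding fs_grad_def cc_sum using n_pos by simp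
qed

lemma in_cls: "in_class n L \<mu> 0 \<nu> ff gg"
  unfolding in_class_def
proof (intro conjI allI impI)
  show "(ff i has_derivative (\<lambda>h. gg i x \<bullet> h)) (at x)" for i x by (rule ff_deriv)
  show "norm (gg i x - gg i y) \<le> L * norm (x - y)" for i x y by (rule gg_lip)
  show "convex_on UNIV (ff i)" for i by (rule cvx_ff)
  show "strongly_convex \<mu> (fs_obj n ff)" by (rule sc)
  show "norm (gg i x - fs_grad n gg x) \<le> 0 * norm (fs_grad n gg x) + \<nu>" for i x
    unfolding fs_grad_eq using cc_le[of i] by (simp add: gg_def)
qed

lemma RR_nonneg: "RR x \<ge> 0"
  unfolding RR_def using lam_mu gfun_nonneg[of z1 gam] z1_pos gam_pos by simp

lemma F_lower: "fs_obj n ff x \<ge> \<mu> / 2 * (x \<bullet> x)"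
  unfolding fs_obj_eq using RR_nonneg by simp

lemma F_zero: "fs_obj n ff 0 = 0"
  unfolding fs_obj_eq RR_def zz_def hfun_def Q_def using z1_pos Ub_pos by (simp add: gfun_0)

lemma INF_F: "(INF x. fs_obj n ff x) = 0"
proof (rule cInf_eq_minimum)
  show "0 \<in> range (fs_obj n ff)" using F_zero by (metis rangeI)
  show "0 \<le> y" if yr: "y \<in> range (fs_obj n ff)" for y
  proof -
    obtain x where y: "y = fs_obj n ff x" using yr by auto
    have "0 \<le> \<mu> / 2 * (x \<bullet> x)" using mupos by simp
    then show ?thesis using F_lower[of x] y by linarith
  qed
qed


lemma step1: "(x - eta *\<^sub>R gg i x)$1 = x$1 - eta * (lam * x$1 + cc i + th * gd gam z1 (zz x) * hdr Ub (x$1))"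
  by (simp add: gg_def CC_def axis_def algebra_simps)
lemma step2: "(x - eta *\<^sub>R gg i x)$2 = x$2 - eta * (\<mu> * x$2 - gd gam z1 (zz x))"
  by (simp add: gg_def CC_def axis_def algebra_simps)


definition "XX = th * \<nu> / (\<mu> * n * K)"
lemma XX_pos: "XX > 0" unfolding XX_def using th_pos nupos mupos n_pos K_pos by (auto intro!: divide_pos_pos mult_pos_pos)
lemma Ub_XX: "th * Ub / 2 = XX / 40" unfolding XX_def Ub_def using mupos n_pos K_pos by (simp add: field_simps)
lemma vb_XX: "vb = XX / 1000" unfolding XX_def vb_def P_def using mupos n_pos K_pos by (simp add: field_simps)
lemma z1_XX: "z1 = 20 * XX / 1000" unfolding XX_def z1_def gam_def P_def using mupos n_pos K_pos by (simp add: field_simps)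
lemma F1: "th * Ub / 2 \<ge> z1 + vb" unfolding Ub_XX vb_XX z1_XX using XX_pos by simp

lemma sat: assumes "Ub \<le> \<bar>x$1\<bar>" "x$2 \<le> vb" shows "gd gam z1 (zz x) = P"
proof -
  have "hfun Ub (x$1) = \<bar>x$1\<bar> - Ub / 2" using hfun_big[OF Ub_pos assms(1)] .
  then have "zz x = th * (\<bar>x$1\<bar> - Ub / 2) - x$2" unfolding zz_def by simp
  moreover have "th * (\<bar>x$1\<bar> - Ub / 2) \<ge> th * (Ub / 2)" using assms(1) th_pos by (intro mult_left_mono) auto
  ultimately have "zz x \<ge> z1" using F1 assms(2) by simp
  then show ?thesis using gd_sat[of z1 "zz x" gam] z1_pos gamz1 by simp
qed

lemma gd_bounds: "0 \<le> gd gam z1 (zz x)" "gd gam z1 (zz x) \<le> P"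
  using gd_nonneg[of z1 gam] gd_le[of z1 gam] z1_pos gam_pos gamz1 by auto

lemma regime1:
  assumes eta: "eta > 0" "eta \<le> 1 / (2 * \<mu> * n * K)"
    and sig: "\<forall>k\<in>{1..K}. sig k permutes {..<n}" and k: "1 \<le> k" "k \<le> K + 1"
  shows "(sgd_start n gg eta sig x0 k)$2 \<ge> vb / 12"
proof -
  have r1: "eta * \<mu> * (n * K) \<le> 1 / 2" using eta mupos n_pos K_pos by (simp add: field_simps)
  have r2: "eta * \<mu> \<le> 1"
  proof -
    have "real n * real K \<ge> 1" using n2 K1 by (metis le_trans mult_le_mono nat_1_eq_mult_iff one_le_numeral
      of_nat_1 of_nat_le_iff of_nat_mult)
    then have "eta * \<mu> * 1 \<le> eta * \<mu> * (n * K)" using eta mupos by (intro mult_left_mono) auto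
    then show ?thesis using r1 by simp
  qed
  have step: "(1 - eta * \<mu>) * c \<le> (x - eta *\<^sub>R gg i x)$2" if "0 \<le> c" "c \<le> x$2" for i x c
  proof -
    have "(x - eta *\<^sub>R gg i x)$2 = (1 - eta * \<mu>) * x$2 + eta * gd gam z1 (zz x)"
      unfolding step2 by (simp add: algebra_simps)
    moreover have "(1 - eta * \<mu>) * c \<le> (1 - eta * \<mu>) * x$2" using that r2 by (intro mult_left_mono) auto
    moreover have "eta * gd gam z1 (zz x) \<ge> 0" using eta gd_bounds by simp
    ultimately show ?thesis by linarith
  qed
  have "(sgd_start n gg eta sig x0 k)$2 \<ge> (1 - eta * \<mu>) ^ (n * (k - 1)) * vb"
    by (rule sgd_decay[where V="\<lambda>x. x$2"]) (use step r2 sig vb_pos k in \<open>auto simp: x0_def axis_def\<close>)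
  moreover have "(1 - eta * \<mu>) ^ (n * (k - 1)) \<ge> (1 - eta * \<mu>) ^ (n * K)"
    using k r2 eta mupos by (intro power_decreasing) auto
  moreover have "(1 - eta * \<mu>) ^ (n * K) \<ge> 1 / 2"
  proof -
    have "1 + real (n * K) * (- (eta * \<mu>)) \<le> (1 + - (eta * \<mu>)) ^ (n * K)"
      by (rule Bernoulli_inequality) (use r2 in simp)
    then show ?thesis using r1 by (simp add: algebra_simps)
  qed
  ultimately have "(sgd_start n gg eta sig x0 k)$2 \<ge> 1 / 2 * vb"
    using vb_pos by (smt (verit) mult_right_mono)
  then show ?thesis using vb_pos by simp
qed


lemma regime2:
  assumes eta: "1 / (2 * \<mu> * n * K) < eta" "eta * lam < 5 / 2"
    and sig: "\<forall>k\<in>{1..K}. sig k permutes {..<n}" and k: "k \<le> K + 1"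
  shows "(sgd_start n gg eta sig x0 k)$2 \<ge> vb / 12"
proof -
  have eta0: "eta > 0" using eta(1) mupos n_pos K_pos by (smt (verit) divide_pos_pos mult_pos_pos)
  define r where "r = eta * \<mu>"
  have r0: "r \<ge> 0" unfolding r_def using eta0 mupos by simp
  have r56: "r \<le> 5 / 6"
  proof -
    have "eta * lam = 3 / 4 * (eta * L)" unfolding lam_def by simp
    then have "eta * L < 10 / 3" using eta(2) by linarith
    moreover have "eta * (4 * \<mu>) \<le> eta * L" using mu_le eta0 by (intro mult_left_mono) auto
    ultimately have "eta * (4 * \<mu>) \<le> 10 / 3" by linarith
    moreover have "eta * (4 * \<mu>) = 4 * (eta * \<mu>)" by simp
    ultimately show ?thesis unfolding r_def by linarith
  qed
  have kap_small: "L / \<mu> * \<nu> / (1000 * n * K) \<le> \<nu> / 150"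
  proof -
    have "eta * lam = 3 / 4 * (eta * L)" unfolding lam_def by simp
    then have "eta * L < 10 / 3" using eta(2) by linarith
    moreover have "eta * (2 * \<mu> * n * K) > 1" using eta(1) mupos n_pos K_pos by (simp add: field_simps)
    moreover have "eta * (3 * L) = 3 * (eta * L)" by simp
    moreover have "eta * (20 * \<mu> * n * K) = 10 * (eta * (2 * \<mu> * n * K))" by simp
    ultimately have "eta * (3 * L) < eta * (20 * \<mu> * n * K)" by linarith
    then have "3 * L < 20 * \<mu> * n * K" using mult_less_cancel_left_pos[OF eta0, of "3 * L" "20 * \<mu> * n * K"] by simp
    then have "L / \<mu> \<le> 20 * (n * K) / 3" using mupos by (simp add: field_simps)
    then have "L / \<mu> * \<nu> \<le> 20 * (n * K) / 3 * \<nu>" using nupos by (intro mult_right_mono) auto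
    then have "L / \<mu> * \<nu> / (1000 * n * K) \<le> 20 * (n * K) / 3 * \<nu> / (1000 * n * K)"
      using n_pos K_pos by (intro divide_right_mono) auto
    moreover have "20 * (n * K) / 3 * \<nu> / (1000 * n * K) = \<nu> / 150" using n_pos K_pos by (simp add: field_simps)
    ultimately show ?thesis by linarith
  qed
  have thP: "th * P \<le> \<nu> / 150"
  proof -
    have "th * P = L / \<mu> * \<nu> / (1000 * n * K)" unfolding P_def using th_sq2 by (simp add: field_simps)
    then show ?thesis using kap_small by simp
  qed
  define Inv where "Inv x \<longleftrightarrow> (1 - r) * (vb / 2) \<le> x$2 \<and> x$2 \<le> vb \<and> (\<bar>x$1\<bar> < Ub \<longrightarrow> vb / 2 \<le> x$2)" for x :: "real^4"
  have noise: "\<bar>(x - eta *\<^sub>R gg i x)$1\<bar> \<ge> Ub" if "\<bar>x$1\<bar> < Ub" for x i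
  proof -
    define G where "G = gd gam z1 (zz x)"
    have G: "0 \<le> G" "G \<le> P" unfolding G_def using gd_bounds by auto
    have hb: "\<bar>hdr Ub (x$1)\<bar> \<le> 1" using hdr_abs[OF Ub_pos] .
    have e: "(x - eta *\<^sub>R gg i x)$1 = (1 - eta * lam) * x$1 - eta * cc i - eta * (th * G * hdr Ub (x$1))"
      unfolding step1 G_def by (simp add: algebra_simps)
    have a1: "\<bar>(1 - eta * lam) * x$1\<bar> \<le> 3 / 2 * Ub"
    proof -
      have "\<bar>1 - eta * lam\<bar> \<le> 3 / 2" using eta(2) mult_pos_pos[OF eta0 lam_pos] by (simp add: abs_if)
      then have "\<bar>1 - eta * lam\<bar> * \<bar>x$1\<bar> \<le> 3 / 2 * Ub" using that by (intro mult_mono) auto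
      then show ?thesis by (simp add: abs_mult)
    qed
    have a2: "\<bar>eta * cc i\<bar> \<ge> eta * (\<nu> / 3)" using cc_ge[of i] eta0 by (simp add: abs_mult)
    have a3: "\<bar>eta * (th * G * hdr Ub (x$1))\<bar> \<le> eta * (\<nu> / 150)"
    proof -
      have "\<bar>th * G * hdr Ub (x$1)\<bar> = th * G * \<bar>hdr Ub (x$1)\<bar>" using th_pos G by (simp add: abs_mult)
      also have "\<dots> \<le> th * P * 1" using th_pos G hb by (intro mult_mono) auto
      finally have "\<bar>th * G * hdr Ub (x$1)\<bar> \<le> \<nu> / 150" using thP by simp
      then have "eta * \<bar>th * G * hdr Ub (x$1)\<bar> \<le> eta * (\<nu> / 150)" using eta0 by (intro mult_left_mono) auto
      then show ?thesis using eta0 by (simp add: abs_mult)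
    qed
    have a4: "eta * (\<nu> / 3) - eta * (\<nu> / 150) \<ge> 5 / 2 * Ub"
    proof -
      define XQ where "XQ = \<nu> / (2 * \<mu> * n * K)"
      have "eta * (\<nu> / 3) - eta * (\<nu> / 150) = 49 / 150 * (eta * \<nu>)" by (simp add: algebra_simps)
      moreover have "eta * \<nu> > XQ"
      proof -
        have "\<nu> * (1 / (2 * \<mu> * n * K)) < \<nu> * eta" by (rule mult_strict_left_mono[OF eta(1) nupos])
        then show ?thesis unfolding XQ_def by (simp add: algebra_simps)
      qed
      moreover have "5 / 2 * Ub = XQ * (1 / 4)" unfolding Ub_def XQ_def by (simp add: field_simps)
      moreover have "XQ > 0" unfolding XQ_def using nupos mupos n_pos K_pos by (auto intro!: divide_pos_pos mult_pos_pos)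
      ultimately show ?thesis by linarith
    qed
    show ?thesis unfolding e using a1 a2 a3 a4 by linarith
  qed
  have pres: "Inv (x - eta *\<^sub>R gg i x)" if "Inv x" for x i
  proof -
    define G where "G = gd gam z1 (zz x)"
    have G: "0 \<le> G" "G \<le> P" unfolding G_def using gd_bounds by auto
    have v': "(x - eta *\<^sub>R gg i x)$2 = (1 - r) * x$2 + r * vb * (G / P)"
      unfolding step2 G_def r_def P_eq using mupos vb_pos by (simp add: algebra_simps)
    have up: "(x - eta *\<^sub>R gg i x)$2 \<le> vb"
    proof -
      have "(1 - r) * x$2 \<le> (1 - r) * vb" using that r56 unfolding Inv_def by (intro mult_left_mono) auto
      moreover have "r * vb * (G / P) \<le> r * vb"
      proof -
        have "G / P \<le> 1" using G P_pos by simp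
        then have "r * vb * (G / P) \<le> r * vb * 1" using r0 vb_pos by (intro mult_left_mono) auto
        then show ?thesis by simp
      qed
      ultimately show ?thesis unfolding v' by (simp add: algebra_simps)
    qed
    have lowG: "r * vb * (G / P) \<ge> 0" using G P_pos r0 vb_pos by simp
    show ?thesis
    proof (cases "\<bar>x$1\<bar> < Ub")
      case True
      have "vb / 2 \<le> x$2" using that True unfolding Inv_def by auto
      then have "(1 - r) * (vb / 2) \<le> (1 - r) * x$2" using r56 by (intro mult_left_mono) auto
      then have "(1 - r) * (vb / 2) \<le> (x - eta *\<^sub>R gg i x)$2" unfolding v' using lowG by linarith
      then show ?thesis unfolding Inv_def using up noise[OF True, of i] by auto
    next
      case False
      have "G = P" unfolding G_def using sat[of x] False that unfolding Inv_def by auto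
      then have v'': "(x - eta *\<^sub>R gg i x)$2 = (1 - r) * x$2 + r * vb" unfolding v' using P_pos by simp
      have "(1 - r) * ((1 - r) * (vb / 2)) \<le> (1 - r) * x$2" using that r56 unfolding Inv_def by (intro mult_left_mono) auto
      moreover have "(1 - r) * ((1 - r) * (vb / 2)) + r * vb = vb / 2 + r * r * (vb / 2)" by (simp add: field_simps)
      moreover have "r * r * (vb / 2) \<ge> 0" using vb_pos by simp
      ultimately have "(x - eta *\<^sub>R gg i x)$2 \<ge> vb / 2" unfolding v'' by linarith
      moreover have "(1 - r) * (vb / 2) \<le> vb / 2" using r0 vb_pos by (simp add: algebra_simps)
      ultimately show ?thesis unfolding Inv_def using up by auto
    qed
  qed
  have "Inv x0" unfolding Inv_def x0_def using r0 r56 vb_pos by (auto simp: axis_def algebra_simps)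
  then have "Inv (sgd_start n gg eta sig x0 k)"
    by (intro sgd_inv[where Pr=Inv and N=n and g=gg and eta=eta, OF pres sig _ k])
  then have "(1 - r) * (vb / 2) \<le> (sgd_start n gg eta sig x0 k)$2" unfolding Inv_def by auto
  moreover have "(1 - r) * (vb / 2) \<ge> vb / 12"
  proof -
    have "r * vb \<le> 5 / 6 * vb" using r56 vb_pos by (intro mult_right_mono) auto
    moreover have "(1 - r) * (vb / 2) = vb / 2 - (r * vb) / 2" by (simp add: field_simps)
    ultimately show ?thesis by linarith
  qed
  ultimately show ?thesis by linarith
qed

lemma regime3:
  assumes eta: "eta * lam \<ge> 5 / 2"
    and sig: "\<forall>k\<in>{1..K}. sig k permutes {..<n}" and k: "k \<le> K + 1"
  shows "(sgd_start n gg eta sig x0 k)$2 \<ge> vb / 12"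
proof -
  have eta0: "eta > 0" using eta lam_pos zero_less_mult_iff[of eta lam] by auto
  define Inv where "Inv x \<longleftrightarrow> U \<le> \<bar>x$1\<bar> \<and> x$2 = vb" for x :: "real^4"
  have pres: "Inv (x - eta *\<^sub>R gg i x)" if "Inv x" for x i
  proof -
    have G: "gd gam z1 (zz x) = P" using sat[of x] that U_ge unfolding Inv_def by auto
    have v: "(x - eta *\<^sub>R gg i x)$2 = vb" unfolding step2 G using that P_eq unfolding Inv_def by simp
    have e: "(x - eta *\<^sub>R gg i x)$1 = (1 - eta * lam) * x$1 - eta * (cc i + th * P * hdr Ub (x$1))"
      unfolding step1 G by (simp add: algebra_simps)
    have a1: "\<bar>(1 - eta * lam) * x$1\<bar> \<ge> (eta * lam - 1) * U"
    proof -
      have "\<bar>(1 - eta * lam) * x$1\<bar> = (eta * lam - 1) * \<bar>x$1\<bar>" using eta by (simp add: abs_mult)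
      moreover have "(eta * lam - 1) * \<bar>x$1\<bar> \<ge> (eta * lam - 1) * U" using that eta unfolding Inv_def
        by (intro mult_left_mono) auto
      ultimately show ?thesis by simp
    qed
    have a2: "\<bar>eta * (cc i + th * P * hdr Ub (x$1))\<bar> \<le> eta * (\<nu> + th * P)"
    proof -
      have "\<bar>th * P * hdr Ub (x$1)\<bar> \<le> th * P * 1"
        using hdr_abs[OF Ub_pos, of "x$1"] th_pos P_pos by (simp add: abs_mult)
      then have "\<bar>cc i + th * P * hdr Ub (x$1)\<bar> \<le> \<nu> + th * P" using cc_le[of i] by linarith
      then show ?thesis using eta0 by (simp add: abs_mult)
    qed
    have a3: "(eta * lam - 1) * U - eta * (\<nu> + th * P) \<ge> U"
    proof -
      have "lam * U \<ge> 5 * (\<nu> + P * th)" unfolding U_def using lam_pos Ub_pos by (simp add: field_simps)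
      then have "eta * (lam * U) \<ge> eta * (5 * (\<nu> + P * th))" using eta0 by (intro mult_left_mono) auto
      moreover have "(eta * lam - 2) * U \<ge> (eta * lam / 5) * U" using eta U_ge Ub_pos by (intro mult_right_mono) auto
      ultimately show ?thesis by (simp add: algebra_simps)
    qed
    have "\<bar>(x - eta *\<^sub>R gg i x)$1\<bar> \<ge> U" unfolding e using a1 a2 a3 by linarith
    then show ?thesis unfolding Inv_def using v by simp
  qed
  have "Inv x0" unfolding Inv_def x0_def using U_ge Ub_pos by (auto simp: axis_def)
  then have "Inv (sgd_start n gg eta sig x0 k)"
    by (intro sgd_inv[where Pr=Inv and N=n and g=gg and eta=eta, OF pres sig _ k])
  then show ?thesis unfolding Inv_def using vb_pos by simp
qed


lemma all_lb:
  assumes sig: "\<forall>k\<in>{1..K}. sig k permutes {..<n}" and eta: "eta > 0" and k: "1 \<le> k" "k \<le> K + 1"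
  shows "(sgd_start n gg eta sig x0 k)$2 \<ge> vb / 12"
proof -
  consider "eta \<le> 1 / (2 * \<mu> * n * K)" | "1 / (2 * \<mu> * n * K) < eta \<and> eta * lam < 5 / 2" | "eta * lam \<ge> 5 / 2"
    by linarith
  then show ?thesis
  proof cases
    case 1 then show ?thesis using regime1[OF eta 1 sig k] by simp
  next
    case 2 then show ?thesis using regime2[OF _ _ sig k(2)] by simp
  next
    case 3 then show ?thesis using regime3[OF 3 sig k(2)] by simp
  qed
qed

lemma final_num: "\<mu> / 2 * (vb / 12)^2 = 1 / 288000000 * (L * \<nu>^2 / (\<mu>^2 * real n ^ 2 * real K ^ 2))"
proof -
  have "vb^2 = (th * th) * \<nu>^2 / (1000000 * real n ^ 2 * real K ^ 2 * \<mu>^2)"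
    unfolding vb_def P_def using mupos n_pos K_pos by (simp add: field_simps power2_eq_square)
  also have "\<dots> = L / \<mu> * \<nu>^2 / (1000000 * real n ^ 2 * real K ^ 2 * \<mu>^2)" using th_sq2 by simp
  finally have "vb^2 = L / \<mu> * \<nu>^2 / (1000000 * real n ^ 2 * real K ^ 2 * \<mu>^2)" .
  then show ?thesis using mupos n_pos K_pos by (simp add: field_simps power2_eq_square)
qed

lemma main:
  assumes sig: "\<forall>k\<in>{1..K}. sig k permutes {..<n}" and eta: "eta > 0"
    and al: "\<forall>k\<in>{1..K+1}. \<alpha> k \<ge> 0" "\<exists>k\<in>{1..K+1}. \<alpha> k \<noteq> 0"
  shows "fs_obj n ff ((1 / (\<Sum>k=1..K+1. \<alpha> k)) *\<^sub>R (\<Sum>k=1..K+1. \<alpha> k *\<^sub>R sgd_start n gg eta sig x0 k))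
           - (INF x. fs_obj n ff x) \<ge> 1 / 288000000 * (L * \<nu>^2 / (\<mu>^2 * real n ^ 2 * real K ^ 2))"
proof -
  define S where "S = (\<Sum>k=1..K+1. \<alpha> k)"
  define xh where "xh = (1 / S) *\<^sub>R (\<Sum>k=1..K+1. \<alpha> k *\<^sub>R sgd_start n gg eta sig x0 k)"
  obtain k0 where k0: "k0 \<in> {1..K+1}" "\<alpha> k0 \<noteq> 0" using al(2) by blast
  have Spos: "S > 0" unfolding S_def
    by (rule sum_pos2[OF _ k0(1)]) (use al k0 in \<open>auto simp: order_le_less\<close>)
  have "(\<Sum>k=1..K+1. \<alpha> k * (vb / 12)) \<le> (\<Sum>k=1..K+1. \<alpha> k * (sgd_start n gg eta sig x0 k)$2)"
    using all_lb[OF sig eta] al(1) by (intro sum_mono mult_left_mono) auto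
  moreover have "(\<Sum>k=1..K+1. \<alpha> k * (vb / 12)) = S * (vb / 12)"
    unfolding S_def by (rule sum_distrib_right[symmetric])
  ultimately have "S * (vb / 12) \<le> (\<Sum>k=1..K+1. \<alpha> k * (sgd_start n gg eta sig x0 k)$2)" by simp
  then have "(1 / S) * (S * (vb / 12)) \<le> (1 / S) * (\<Sum>k=1..K+1. \<alpha> k * (sgd_start n gg eta sig x0 k)$2)"
    using Spos by (intro mult_left_mono) auto
  moreover have "(1 / S) * (S * (vb / 12)) = vb / 12" using Spos by simp
  moreover have "xh$2 = (1 / S) * (\<Sum>k=1..K+1. \<alpha> k * (sgd_start n gg eta sig x0 k)$2)"
    unfolding xh_def by (simp only: vector_scaleR_component sum_component real_scaleR_def)
  ultimately have x2: "xh$2 \<ge> vb / 12" by simp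
  have "(vb / 12)^2 \<le> (xh$2)^2" using x2 vb_pos by (intro power_mono) auto
  also have "\<dots> \<le> (norm xh)^2" using component_le_norm_cart[of xh 2] x2 vb_pos by (intro power_mono) auto
  also have "\<dots> = xh \<bullet> xh" by (rule power2_norm_eq_inner)
  finally have "\<mu> / 2 * (vb / 12)^2 \<le> \<mu> / 2 * (xh \<bullet> xh)" using mupos by (intro mult_left_mono) auto
  also have "\<dots> \<le> fs_obj n ff xh" by (rule F_lower)
  finally show ?thesis unfolding INF_F xh_def[symmetric] S_def[symmetric] final_num by simp
qed

end

theorem theorem7:
  "\<exists>c>0. \<forall>(n::nat) (K::nat) (L::real) (\<mu>::real) (\<nu>::real).
     n \<ge> 2 \<longrightarrow> K \<ge> 1 \<longrightarrow> L > 0 \<longrightarrow> \<mu> > 0 \<longrightarrow> \<nu> > 0 \<longrightarrow> L / \<mu> \<ge> 4 \<longrightarrow>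
     (\<exists>(f :: nat \<Rightarrow> real^4 \<Rightarrow> real) (g :: nat \<Rightarrow> real^4 \<Rightarrow> real^4) (x0 :: real^4).
        in_class n L \<mu> 0 \<nu> f g \<and>
        (\<forall>(\<sigma> :: nat \<Rightarrow> nat \<Rightarrow> nat) (\<eta>::real) (\<alpha> :: nat \<Rightarrow> real).
           (\<forall>k\<in>{1..K}. \<sigma> k permutes {..<n}) \<longrightarrow> \<eta> > 0 \<longrightarrow>
           (\<forall>k\<in>{1..K+1}. \<alpha> k \<ge> 0) \<longrightarrow> (\<exists>k\<in>{1..K+1}. \<alpha> k \<noteq> 0) \<longrightarrow>
           (let xhat = (1 / (\<Sum>k=1..K+1. \<alpha> k)) *\<^sub>R
                         (\<Sum>k=1..K+1. \<alpha> k *\<^sub>R sgd_start n g \<eta> \<sigma> x0 k)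
            in fs_obj n f xhat - (INF x. fs_obj n f x)
                 \<ge> c * (L * \<nu>\<^sup>2 / (\<mu>\<^sup>2 * real n ^ 2 * real K ^ 2)))))"
proof (rule exI[of _ "1 / 288000000"], intro conjI allI impI)
  fix n K :: nat and L \<mu> \<nu> :: real
  assume a: "n \<ge> 2" "K \<ge> 1" "L > 0" "\<mu> > 0" "\<nu> > 0" "L / \<mu> \<ge> 4"
  interpret c: cons n K L \<mu> \<nu> using a by unfold_locales auto
  show "\<exists>(f :: nat \<Rightarrow> real^4 \<Rightarrow> real) (g :: nat \<Rightarrow> real^4 \<Rightarrow> real^4) (x0 :: real^4).
        in_class n L \<mu> 0 \<nu> f g \<and>
        (\<forall>(\<sigma> :: nat \<Rightarrow> nat \<Rightarrow> nat) (\<eta>::real) (\<alpha> :: nat \<Rightarrow> real).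
           (\<forall>k\<in>{1..K}. \<sigma> k permutes {..<n}) \<longrightarrow> \<eta> > 0 \<longrightarrow>
           (\<forall>k\<in>{1..K+1}. \<alpha> k \<ge> 0) \<longrightarrow> (\<exists>k\<in>{1..K+1}. \<alpha> k \<noteq> 0) \<longrightarrow>
           (let xhat = (1 / (\<Sum>k=1..K+1. \<alpha> k)) *\<^sub>R
                         (\<Sum>k=1..K+1. \<alpha> k *\<^sub>R sgd_start n g \<eta> \<sigma> x0 k)
            in fs_obj n f xhat - (INF x. fs_obj n f x)
                 \<ge> 1 / 288000000 * (L * \<nu>\<^sup>2 / (\<mu>\<^sup>2 * real n ^ 2 * real K ^ 2))))"
    using c.in_cls c.main unfolding Let_def by blast
qed simp

end
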